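(* Assume the following conjecture holds for every algorithm that succeeds with high probability in $L$ with expected cost (total number of bits sent) at most $L'$ under adversarial noise: the maximal communication rate achievable by an interactive coding scheme for a binary error channel with noise rate $\epsilon$ is $1-\Theta(\sqrt{\epsilon})$ as $\epsilon \to 0$ (this holding also for fully adversarial binary channels when the parties have access to randomness unknown to the channel). Then any algorithm for robust interactive communication (i.e., one tolerating $T$ adversarial bit flips) must have $L' = L + \Omega\left(T + \sqrt{LT}\right)$ for some $T \ge 1$.
   Context: Setting: Alice and Bob simulate a noise-free two-party protocol with transcript length $L$ over a binary channel on which an adversary flips $T$ bits. $L'$ is the expected total number of bits sent by the simulating algorithm, the communication rate is $L/L'$ and the noise rate is $\epsilon = T/L'$. *)

theory Defs
  imports Complex_Main
begin

text \<open>An algorithm A (from a set Algs of algorithms for robust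
interactive communication over a binary channel) simulates a noise-free protocol
of transcript length L while the adversary flips T bits; cost A L T is the
expected total number of bits sent, L'.\<close>

definition noise_rate :: "real \<Rightarrow> nat \<Rightarrow> real" where
  "noise_rate L' T = real T / L'"

definition comm_rate :: "nat \<Rightarrow> real \<Rightarrow> real" where
  "comm_rate L L' = real L / L'"

text \<open>Upper-bound part of the conjecture: on a channel with noise rate eps
(i.e. the adversary may flip an eps fraction of the sent bits), for all
0 < eps <= eps0, every algorithm achieves communication rate at most 1 - c sqrt eps.\<close>

definition rate_upper_bound ::
  "'a set \<Rightarrow> ('a \<Rightarrow> nat \<Rightarrow> nat \<Rightarrow> real) \<Rightarrow> real \<Rightarrow> real \<Rightarrow> bool" where
  "rate_upper_bound Algs cost c eps0 \<longleftrightarrow>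
     (\<forall>eps. 0 < eps \<and> eps \<le> eps0 \<longrightarrow>
        (\<forall>A\<in>Algs. \<forall>L T. 1 \<le> L \<longrightarrow> eps \<le> noise_rate (cost A L T) T \<longrightarrow>
            comm_rate L (cost A L T) \<le> 1 - c * sqrt eps))"

end

theory Submission
  imports Defs
begin

theorem theorem8:
  fixes Algs :: "'a set" and cost :: "'a \<Rightarrow> nat \<Rightarrow> nat \<Rightarrow> real"
  assumes flips_le_sent: "\<And>A L T. A \<in> Algs \<Longrightarrow> real T \<le> cost A L T"
    and cost_pos: "\<And>A L T. A \<in> Algs \<Longrightarrow> 0 < cost A L T"
    and conjecture: "\<exists>c>0. \<exists>eps0>0. rate_upper_bound Algs cost c eps0"
  shows "\<exists>c>0. \<forall>A\<in>Algs. \<forall>L T. 1 \<le> L \<longrightarrow> 1 \<le> T \<longrightarrow>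
           cost A L T \<ge> real L + c * (real T + sqrt (real L * real T))"
proof -
  obtain c eps0 where c: "c > 0" and e0: "eps0 > 0" and R: "rate_upper_bound Algs cost c eps0"
    using conjecture by blast
  define d where "d = c * min 1 (sqrt eps0) / 2"
  have d0: "d > 0" using c e0 by (simp add: d_def)
  have d1: "d \<le> c / 2" using c by (simp add: d_def)
  have d2: "d \<le> c * sqrt eps0 / 2" using c by (simp add: d_def)
  show ?thesis
  proof (intro exI[of _ d] conjI d0 ballI allI impI)
    fix A and L T :: nat assume A: "A \<in> Algs" and L: "1 \<le> L" and T: "1 \<le> T"
    define C where "C = cost A L T"
    have Cp: "C > 0" using cost_pos[OF A] by (simp add: C_def)
    have CT: "real T \<le> C" using flips_le_sent[OF A] by (simp add: C_def)
    have Rb: "\<And>eps. 0 < eps \<Longrightarrow> eps \<le> eps0 \<Longrightarrow> eps \<le> real T / C \<Longrightarrow> real L / C \<le> 1 - c * sqrt eps"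
      using R A L unfolding rate_upper_bound_def noise_rate_def comm_rate_def C_def by blast
    have sq0: "0 \<le> sqrt (real L * real T)" by simp
    show "real L + d * (real T + sqrt (real L * real T)) \<le> cost A L T"
    proof (cases "real T / C \<le> eps0")
      case True
      have pos: "0 < real T / C" using T Cp by simp
      have "real L / C \<le> 1 - c * sqrt (real T / C)" using Rb[OF pos True] by simp
      hence "real L \<le> C - c * (sqrt (real T / C) * C)" using Cp
        by (simp add: field_simps)
      moreover have "sqrt (real T / C) * C = sqrt (real T * C)"
      proof -
        have "sqrt (real T / C) * C = sqrt (real T / C) * sqrt (C * C)" using Cp by simp
        also have "\<dots> = sqrt (real T / C * (C * C))" by (simp only: real_sqrt_mult)
        also have "real T / C * (C * C) = real T * C" using Cp by (simp add: field_simps)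
        finally show ?thesis .
      qed
      ultimately have k: "real L \<le> C - c * sqrt (real T * C)" by simp
      have "0 \<le> c * sqrt (real T * C)" using c Cp by simp
      hence CL: "real L \<le> C" using k by linarith
      have "real L * real T \<le> real T * C" using mult_right_mono[OF CL, of "real T"] by (simp add: mult.commute)
      hence s1: "sqrt (real L * real T) \<le> sqrt (real T * C)" by (rule real_sqrt_le_mono)
      have s2: "real T \<le> sqrt (real T * C)"
      proof -
        have "real T = sqrt (real T * real T)" by simp
        also have "\<dots> \<le> sqrt (real T * C)" by (rule real_sqrt_le_mono, rule mult_left_mono[OF CT]) simp
        finally show ?thesis .
      qed
      have X: "real T + sqrt (real L * real T) \<le> 2 * sqrt (real T * C)" using s1 s2 by linarith
      have "d * (real T + sqrt (real L * real T)) \<le> (c/2) * (real T + sqrt (real L * real T))"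
        by (rule mult_right_mono[OF d1]) (use sq0 in linarith)
      also have "\<dots> \<le> (c/2) * (2 * sqrt (real T * C))"
        by (rule mult_left_mono[OF X]) (use c in simp)
      finally have "d * (real T + sqrt (real L * real T)) \<le> (c/2) * (2 * sqrt (real T * C))" .
      then show ?thesis using k C_def by linarith
    next
      case False
      have "real L / C \<le> 1 - c * sqrt eps0" using Rb[OF e0 order.refl] False by simp
      hence k: "real L \<le> C - c * sqrt eps0 * C" using Cp by (simp add: field_simps)
      have p: "0 \<le> c * sqrt eps0 * C" using c e0 Cp by simp
      have CL: "real L \<le> C" using k p by simp
      have s1: "sqrt (real L * real T) \<le> C"
      proof -
        have "sqrt (real L * real T) \<le> sqrt (C * C)"
          using CL CT by (intro real_sqrt_le_mono mult_mono) simp_all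
        thus ?thesis using Cp by simp
      qed
      have X: "real T + sqrt (real L * real T) \<le> 2 * C" using s1 CT by linarith
      have "d * (real T + sqrt (real L * real T)) \<le> (c * sqrt eps0 / 2) * (real T + sqrt (real L * real T))"
        by (rule mult_right_mono[OF d2]) (use sq0 in linarith)
      also have "\<dots> \<le> (c * sqrt eps0 / 2) * (2 * C)"
        by (rule mult_left_mono[OF X]) (use c e0 in simp)
      finally have "d * (real T + sqrt (real L * real T)) \<le> (c * sqrt eps0 / 2) * (2 * C)" .
      moreover have "c * sqrt eps0 / 2 * (2 * C) = c * sqrt eps0 * C" by simp
      ultimately show ?thesis using k C_def by linarith
    qed
  qed
qed

end
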